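(* Let $n,d\ge1$. Let $W=(w_{i,j})$, $\widetilde W=(\tilde w_{i,j})$ be real $n\times n$ matrices and $G,\widetilde G$ real $nd\times nd$ block matrices with $d\times d$ blocks $G_{i,j},\widetilde G_{i,j}$. Suppose there exist $f_1,\dots,f_n>0$ and $\varepsilon,\eta\ge0$ with $$\sup_{i\ne j}\Big|\frac{\tilde w_{i,j}}{f_i}-w_{i,j}\Big|\le\varepsilon,\qquad \sup_{i,j}\|\widetilde G_{i,j}-G_{i,j}\|_F\le\eta,$$ and that there is $C>0$ with $0\le w_{i,j}\le C$ for all $i,j$, $\sup_{i,j}\|G_{i,j}\|_F\le C$ and $\sup_{i,j}\|\widetilde G_{i,j}\|_F\le C$. If $\inf_i\frac1n\sum_{j\ne i}w_{i,j}>\gamma$ and $\gamma>\varepsilon$, then $$\|L_0(W,G)-L_0(\widetilde W,\widetilde G)\|_{op}\le \frac1\gamma C(\eta+\varepsilon)+\frac{\varepsilon}{\gamma(\gamma-\varepsilon)}C^2$$ and $$\|L(W,G)-L_0(\widetilde W,\widetilde G)\|_{op}\le \frac1\gamma C(\eta+\varepsilon)+\frac{\varepsilon}{\gamma(\gamma-\varepsilon)}C^2+\frac{C^2}{n\gamma}.$$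
   Context: For an $n\times n$ matrix $W=(w_{i,j})$ and an $nd\times nd$ block matrix $G$ with $d\times d$ blocks $G_{i,j}$, define $S$ as the block matrix with blocks $S_{i,j}=w_{i,j}G_{i,j}$ and $D$ as the block-diagonal matrix with diagonal blocks $D_{i,i}=\big(\sum_{j\ne i}w_{i,j}\big)\mathrm I_d$ (assumed invertible); $L(W,G):=D^{-1}S$. Further $L_0(W,G):=L(W\circ 1_{i\ne j},G)$, i.e. $L$ computed from the weight matrix obtained from $W$ by setting its diagonal entries to $0$. $\|\cdot\|_{op}$ is the largest singular value, $\|\cdot\|_F$ the Frobenius norm. *)

theory Defs
  imports "HOL-Analysis.Analysis"
begin

text \<open>An nd x nd block matrix is indexed by pairs (i,a) with i a block index
  (type 'n, n = CARD('n)) and a an index inside the block (type 'd, d = CARD('d)).\<close>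

definition block :: "real^('n::finite \<times> 'd::finite)^('n \<times> 'd) \<Rightarrow> 'n \<Rightarrow> 'n \<Rightarrow> real^'d^'d" where
  "block G i j = (\<chi> a b. G $ (i, a) $ (j, b))"

definition Smat :: "real^'n^'n \<Rightarrow> real^('n::finite \<times> 'd::finite)^('n \<times> 'd) \<Rightarrow> real^('n \<times> 'd)^('n \<times> 'd)" where
  "Smat W G = (\<chi> p q. W $ fst p $ fst q * G $ p $ q)"

definition Dmat :: "real^'n^'n \<Rightarrow> real^('n::finite \<times> 'd::finite)^('n \<times> 'd)" where
  "Dmat W = (\<chi> p q. if p = q then (\<Sum>j\<in>UNIV - {fst p}. W $ fst p $ j) else 0)"

definition Lmat :: "real^'n^'n \<Rightarrow> real^('n::finite \<times> 'd::finite)^('n \<times> 'd) \<Rightarrow> real^('n \<times> 'd)^('n \<times> 'd)" where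
  "Lmat W G = matrix_inv (Dmat W) ** Smat W G"

definition offdiag :: "real^'n^'n \<Rightarrow> real^'n^'n" where
  "offdiag W = (\<chi> i j. if i = j then 0 else W $ i $ j)"

definition L0mat :: "real^'n^'n \<Rightarrow> real^('n::finite \<times> 'd::finite)^('n \<times> 'd) \<Rightarrow> real^('n \<times> 'd)^('n \<times> 'd)" where
  "L0mat W G = Lmat (offdiag W) G"

definition opnorm :: "real^'m::finite^'k::finite \<Rightarrow> real" where
  "opnorm A = onorm (\<lambda>x. A *v x)"

end

theory Submission
  imports Defs
begin


lemma sum_prod_UNIV: "(\<Sum>p\<in>(UNIV::('a::finite\<times>'b::finite) set). h p) = (\<Sum>i\<in>UNIV. \<Sum>a\<in>UNIV. h (i,a))"
  by (simp add: sum.cartesian_product flip: UNIV_Times_UNIV)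

lemma norm_sq_vec: "(norm (x::real^'k::finite))\<^sup>2 = (\<Sum>k\<in>UNIV. (x$k)\<^sup>2)"
  by (simp only: power2_norm_eq_inner) (simp add: inner_vec_def power2_eq_square)

lemma norm_sq_mat: "(norm (x::real^'k::finite^'l::finite))\<^sup>2 = (\<Sum>l\<in>UNIV. \<Sum>k\<in>UNIV. (x$l$k)\<^sup>2)"
  by (simp only: power2_norm_eq_inner) (simp add: inner_vec_def power2_eq_square)

lemma norm_block_sq: "(norm (block M i j))\<^sup>2 = (\<Sum>a\<in>UNIV. \<Sum>b\<in>UNIV. (M$(i,a)$(j,b))\<^sup>2)"
  by (simp add: norm_sq_mat block_def)

lemma frob_block:
  fixes M :: "real^('n::finite \<times> 'd::finite)^('n \<times> 'd)"
  shows "(\<Sum>p\<in>UNIV. \<Sum>q\<in>UNIV. (M$p$q)\<^sup>2) = (\<Sum>i\<in>UNIV. \<Sum>j\<in>UNIV. (norm (block M i j))\<^sup>2)"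
proof -
  have "(\<Sum>p\<in>UNIV. \<Sum>q\<in>UNIV. (M$p$q)\<^sup>2) = (\<Sum>i\<in>UNIV. \<Sum>a\<in>UNIV. \<Sum>j\<in>UNIV. \<Sum>b\<in>UNIV. (M$(i,a)$(j,b))\<^sup>2)"
    by (simp add: sum_prod_UNIV)
  also have "\<dots> = (\<Sum>i\<in>UNIV. \<Sum>j\<in>UNIV. \<Sum>a\<in>UNIV. \<Sum>b\<in>UNIV. (M$(i,a)$(j,b))\<^sup>2)"
    by (rule sum.cong[OF refl], rule sum.swap)
  finally show ?thesis by (simp add: norm_block_sq)
qed

lemma op_le_frob:
  fixes M :: "real^'m::finite^'k::finite"
  shows "opnorm M \<le> sqrt (\<Sum>p\<in>UNIV. \<Sum>q\<in>UNIV. (M$p$q)\<^sup>2)"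
  unfolding opnorm_def
proof (rule onorm_le)
  fix x :: "real^'m"
  have "(norm (M *v x))\<^sup>2 = (\<Sum>p\<in>UNIV. (\<Sum>q\<in>UNIV. M$p$q * x$q)\<^sup>2)"
    by (simp add: norm_sq_vec matrix_vector_mult_def)
  also have "\<dots> \<le> (\<Sum>p\<in>UNIV. (\<Sum>q\<in>UNIV. (M$p$q)\<^sup>2) * (\<Sum>q\<in>UNIV. (x$q)\<^sup>2))"
    by (rule sum_mono, rule Cauchy_Schwarz_ineq_sum)
  also have "\<dots> = (\<Sum>p\<in>UNIV. \<Sum>q\<in>UNIV. (M$p$q)\<^sup>2) * (norm x)\<^sup>2"
    by (simp add: norm_sq_vec sum_distrib_right)
  finally have "(norm (M *v x))\<^sup>2 \<le> (sqrt (\<Sum>p\<in>UNIV. \<Sum>q\<in>UNIV. (M$p$q)\<^sup>2) * norm x)\<^sup>2"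
    by (simp add: power_mult_distrib sum_nonneg)
  then show "norm (M *v x) \<le> sqrt (\<Sum>p\<in>UNIV. \<Sum>q\<in>UNIV. (M$p$q)\<^sup>2) * norm x"
    by (rule power2_le_imp_le) (simp add: sum_nonneg)
qed

lemma op_blockdiag:
  fixes M :: "real^('n::finite \<times> 'd::finite)^('n \<times> 'd)"
  assumes off: "\<And>i j. i \<noteq> j \<Longrightarrow> block M i j = 0" and bd: "\<And>i. norm (block M i i) \<le> \<beta>"
  shows "opnorm M \<le> \<beta>"
  unfolding opnorm_def
proof (rule onorm_le)
  fix x :: "real^('n \<times> 'd)"
  have z: "M$(i,a)$(j,b) = 0" if "i \<noteq> j" for i j a b
  proof -
    have "block M i j $ a $ b = 0" using off[OF that] by simp
    then show ?thesis by (simp add: block_def)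
  qed
  have row: "(M *v x)$(i,a) = (\<Sum>b\<in>UNIV. M$(i,a)$(i,b) * x$(i,b))" for i a
  proof -
    have "(M *v x)$(i,a) = (\<Sum>j\<in>UNIV. \<Sum>b\<in>UNIV. M$(i,a)$(j,b) * x$(j,b))"
      by (simp add: matrix_vector_mult_def sum_prod_UNIV)
    also have "\<dots> = (\<Sum>j\<in>UNIV. if j = i then (\<Sum>b\<in>UNIV. M$(i,a)$(i,b) * x$(i,b)) else 0)"
      by (rule sum.cong[OF refl]) (auto simp: z)
    finally show ?thesis by simp
  qed
  have b0: "0 \<le> \<beta>" using bd[of undefined] norm_ge_zero order_trans by blast
  have "(norm (M *v x))\<^sup>2 = (\<Sum>i\<in>UNIV. \<Sum>a\<in>UNIV. (\<Sum>b\<in>UNIV. M$(i,a)$(i,b) * x$(i,b))\<^sup>2)"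
    by (simp add: norm_sq_vec sum_prod_UNIV row)
  also have "\<dots> \<le> (\<Sum>i\<in>UNIV. \<Sum>a\<in>UNIV. (\<Sum>b\<in>UNIV. (M$(i,a)$(i,b))\<^sup>2) * (\<Sum>b\<in>UNIV. (x$(i,b))\<^sup>2))"
    by (intro sum_mono Cauchy_Schwarz_ineq_sum)
  also have "\<dots> = (\<Sum>i\<in>UNIV. (norm (block M i i))\<^sup>2 * (\<Sum>b\<in>UNIV. (x$(i,b))\<^sup>2))"
    by (simp add: norm_block_sq sum_distrib_right)
  also have "\<dots> \<le> (\<Sum>i\<in>UNIV. \<beta>\<^sup>2 * (\<Sum>b\<in>UNIV. (x$(i,b))\<^sup>2))"
    by (intro sum_mono mult_right_mono sum_nonneg power_mono) (auto simp: bd)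
  also have "\<dots> = (\<beta> * norm x)\<^sup>2"
    by (simp add: norm_sq_vec sum_prod_UNIV power_mult_distrib sum_distrib_left)
  finally show "norm (M *v x) \<le> \<beta> * norm x"
    by (rule power2_le_imp_le) (simp add: b0)
qed

lemma ifmult: "(if P then x else 0) * (y::real) = (if P then x*y else 0)" by simp

definition Ds :: "real^'n::finite^'n \<Rightarrow> 'n \<Rightarrow> real" where
  "Ds W i = (\<Sum>j\<in>UNIV-{i}. W$i$j)"

lemma Ds_offdiag: "Ds (offdiag W) i = Ds W i"
  unfolding Ds_def offdiag_def by (rule sum.cong) auto

lemma matrix_inv_eq:
  fixes A B :: "real^'n::finite^'n"
  assumes "A ** B = mat 1" "B ** A = mat 1"
  shows "matrix_inv A = B"
proof -
  let ?A' = "matrix_inv A"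
  have "A ** ?A' = mat 1 \<and> ?A' ** A = mat 1"
    unfolding matrix_inv_def by (rule someI[of _ B]) (use assms in auto)
  then have "?A' = ?A' ** (A ** B)" "?A' ** A = mat 1" by (auto simp: assms matrix_mul_rid)
  then show ?thesis by (metis matrix_mul_assoc matrix_mul_lid)
qed

lemma Lmat_entry:
  fixes W :: "real^'n::finite^'n" and G :: "real^('n \<times> 'd::finite)^('n \<times> 'd)"
  assumes nz: "\<And>i. Ds W i \<noteq> 0"
  shows "Lmat W G $ p $ q = W $ fst p $ fst q * G $ p $ q / Ds W (fst p)"
proof -
  define Di :: "real^('n \<times> 'd)^('n \<times> 'd)" where "Di = (\<chi> p q. if p = q then 1 / Ds W (fst p) else 0)"
  have DM: "Dmat W = (\<chi> p q. if p = q then Ds W (fst p) else 0)"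
    unfolding Dmat_def Ds_def by simp
  have e1: "(Dmat W ** Di) $ p $ q = mat 1 $ p $ q" for p q
    unfolding matrix_matrix_mult_def DM Di_def mat_def
    by (simp add: ifmult sum.delta nz)
  have e2: "(Di ** Dmat W) $ p $ q = mat 1 $ p $ q" for p q
    unfolding matrix_matrix_mult_def DM Di_def mat_def
    by (simp add: ifmult sum.delta nz)
  have "matrix_inv (Dmat W) = Di" by (rule matrix_inv_eq) (simp_all add: vec_eq_iff e1 e2)
  then show ?thesis
    unfolding Lmat_def matrix_matrix_mult_def Di_def Smat_def
    by (simp add: ifmult sum.delta)
qed



lemma key_ineq:
  fixes C e g D A S n :: real
  assumes e0: "0 \<le> e" and eg: "e < g" and C0: "C > 0" and Dg: "D > n*g" and DC: "D \<le> n*C"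
    and A0: "0 < A" and AD: "A \<le> D" and DA: "D - A \<le> n*e" and S0: "0 \<le> S"
    and Sb: "S \<le> 2*C*A - (C+2*e)*D + n*(e^2 + 2*C*e)" and n1: "n \<ge> 1"
  shows "sqrt S * ((D - A)/(A*D)) \<le> C*e/(sqrt n * g*(g-e))"
proof -
  define u where "u = D - A"
  define r where "r = n*e - u"
  have u0: "0 \<le> u" and r0: "0 \<le> r" using AD DA by (auto simp: u_def r_def)
  have g0: "g > 0" using e0 eg by linarith
  have "n*g < n*C" using Dg DC by linarith
  then have gC: "g < C" using n1 by (simp add: mult_less_cancel_left)
  have nen: "n*e \<le> n*g" using eg n1 by (intro mult_left_mono) auto
  have Dne: "D \<ge> n*e" using Dg nen by linarith
  have "0 < n*g" using g0 n1 by simp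
  then have D0: "D > 0" using Dg by linarith
  have S1: "S \<le> n*C^2 + 2*C*r"
  proof -
    have "C*D \<le> n*C^2" using DC C0 by (simp add: power2_eq_square)
    moreover have "e*(n*e) \<le> e*D" using Dne e0 by (intro mult_left_mono) auto
    moreover have "0 \<le> n*e" using e0 n1 by simp
    then have "0 \<le> e*D" using Dne e0 by simp
    ultimately have "-2*e*D + n*e^2 \<le> 0" by (simp add: power2_eq_square algebra_simps)
    then show ?thesis using Sb \<open>C*D \<le> n*C^2\<close> unfolding r_def u_def by (simp add: algebra_simps power2_eq_square)
  qed
  have c1: "S * u^2 \<le> C^2 * n^3 * e^2"
  proof (cases "e = 0")
    case True
    then have "u = 0" using u0 r0 r_def by simp
    then show ?thesis using n1 by simp
  next
    case False
    then have ep: "e > 0" using e0 by simp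
    have h1: "S * u^2 \<le> (n*C^2 + 2*C*r) * u^2" using S1 by (simp add: mult_right_mono)
    have h2: "(n*C^2 + 2*C*r) * e \<le> C^2 * (n*e + 2*r)"
    proof -
      have "(C*r)*e \<le> (C*r)*C" using ep eg gC r0 C0 by (intro mult_left_mono) auto
      then show ?thesis by (simp add: algebra_simps power2_eq_square)
    qed
    have h3: "(n*e + 2*r) * u^2 \<le> (n*e)^3"
    proof -
      have "u = n*e - r" by (simp add: r_def)
      moreover have "r^2 * (3*(n*e) - 2*r) \<ge> 0"
      proof -
        have "0 \<le> n*e" using e0 n1 by simp
        moreover have "3*(n*e) - 2*r = n*e + 2*u" by (simp add: r_def algebra_simps)
        ultimately have "3*(n*e) - 2*r \<ge> 0" using u0 by linarith
        then show ?thesis by simp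
      qed
      moreover have "(n*e)^3 - (n*e + 2*r) * (n*e - r)^2 = r^2 * (3*(n*e) - 2*r)"
        by (simp add: power2_eq_square power3_eq_cube algebra_simps)
      ultimately show ?thesis by simp
    qed
    have "e * (S * u^2) \<le> e * ((n*C^2 + 2*C*r) * u^2)" using h1 ep by simp
    also have "\<dots> = ((n*C^2 + 2*C*r) * e) * u^2" by simp
    also have "\<dots> \<le> (C^2 * (n*e + 2*r)) * u^2" using h2 by (simp add: mult_right_mono)
    also have "\<dots> = C^2 * ((n*e + 2*r) * u^2)" by simp
    also have "\<dots> \<le> C^2 * (n*e)^3" using h3 by (simp add: mult_left_mono)
    also have "\<dots> = e * (C^2 * n^3 * e^2)" by (simp add: power3_eq_cube power2_eq_square)
    finally show ?thesis using ep by simp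
  qed
  have c1': "sqrt S * u \<le> C*e*n* sqrt n"
  proof (rule power2_le_imp_le)
    show "(sqrt S * u)^2 \<le> (C*e*n* sqrt n)^2"
      using c1 S0 n1 by (simp add: power_mult_distrib power3_eq_cube power2_eq_square algebra_simps)
    show "0 \<le> C*e*n* sqrt n" using C0 e0 n1 by simp
  qed
  have c2: "n^2 * (g*(g-e)) \<le> D*(D - n*e)"
  proof -
    have "0 \<le> n*g" using g0 n1 by simp
    then have "(D - n*g) * (D + n*g - n*e) \<ge> 0" using Dg nen Dne
      by (intro mult_nonneg_nonneg) auto
    then show ?thesis by (simp add: algebra_simps power2_eq_square)
  qed
  have c3: "D - n*e \<le> A" using DA by simp
  have pos: "sqrt n * g * (g - e) > 0" using n1 g0 eg by simp
  have "sqrt S * u * (sqrt n * g * (g-e)) \<le> C*e*n* sqrt n * (sqrt n * g * (g-e))"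
    using c1' pos by (simp add: mult_right_mono)
  also have "\<dots> = C*e*(n^2*(g*(g-e)))" using n1 by (simp add: power2_eq_square algebra_simps)
  also have "\<dots> \<le> C*e*(D*(D - n*e))" using c2 C0 e0 by (simp add: mult_left_mono)
  also have "\<dots> \<le> C*e*(D*A)" using c3 C0 e0 Dne D0
    by (intro mult_left_mono) (auto intro: mult_left_mono simp: mult_nonneg_nonneg)
  finally have main: "sqrt S * u * (sqrt n * g * (g-e)) \<le> C*e*(A*D)" by (simp add: algebra_simps)
  have AD0: "A*D > 0" using A0 AD by simp
  show ?thesis
    unfolding u_def[symmetric]
    using main AD0 pos by (simp add: divide_simps mult.commute mult.left_commute)
qed



lemma chord_pt:
  fixes a w C e :: real
  assumes "0 \<le> w" "w \<le> C" "\<bar>a - w\<bar> \<le> e"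
  shows "a^2 \<le> 2*C*a - (C+2*e)*w + (e^2 + 2*C*e)"
proof -
  define d where "d = a - w"
  have "2*C*a - (C+2*e)*w + (e^2 + 2*C*e) - a^2 = w*(C-w) + (e+d)*(2*C - 2*w + e - d)"
    by (simp add: d_def algebra_simps power2_eq_square)
  moreover have "w*(C-w) \<ge> 0" using assms by simp
  moreover have "(e+d)*(2*C - 2*w + e - d) \<ge> 0" using assms unfolding d_def
    by (intro mult_nonneg_nonneg) (auto simp: abs_le_iff)
  ultimately show ?thesis by linarith
qed

lemma pair_norm:
  fixes g h :: "'v::real_normed_vector"
  assumes "0 \<le> w" "w \<le> C" "\<bar>a - w\<bar> \<le> e" "norm (h - g) \<le> \<eta>" "norm h \<le> C"
  shows "norm (w *\<^sub>R g - a *\<^sub>R h) \<le> C*(\<eta>+e)"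
proof -
  have "w *\<^sub>R g - a *\<^sub>R h = w *\<^sub>R (g - h) + (w - a) *\<^sub>R h"
    by (simp add: algebra_simps)
  then have "norm (w *\<^sub>R g - a *\<^sub>R h) \<le> norm (w *\<^sub>R (g - h)) + norm ((w - a) *\<^sub>R h)"
    by (metis norm_triangle_ineq)
  also have "\<dots> = \<bar>w\<bar> * norm (h - g) + \<bar>a - w\<bar> * norm h"
    by (simp add: norm_minus_commute abs_minus_commute)
  also have "\<dots> \<le> C * \<eta> + e * C"
    using assms by (intro add_mono mult_mono) auto
  finally show ?thesis by (simp add: algebra_simps)
qed

lemma L2_sq: "(L2_set f A)^2 = (\<Sum>i\<in>A. (f i)^2)"
  unfolding L2_set_def by (simp add: sum_nonneg)

lemma row_bound:
  fixes w a :: "'j::finite \<Rightarrow> real" and g h :: "'j \<Rightarrow> 'v::real_normed_vector" and C e \<eta> \<gamma> :: real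
  assumes w0: "\<And>j. 0 \<le> w j" and wC: "\<And>j. w j \<le> C" and ae: "\<And>j. \<bar>a j - w j\<bar> \<le> e"
    and gh: "\<And>j. norm (h j - g j) \<le> \<eta>" and gb: "\<And>j. norm (g j) \<le> C" and hb: "\<And>j. norm (h j) \<le> C"
    and e0: "0 \<le> e" and eg: "e < \<gamma>" and \<eta>0: "0 \<le> \<eta>" and C0: "C > 0"
    and Dg: "sum w UNIV > real CARD('j) * \<gamma>"
  shows "(\<Sum>j\<in>UNIV. (norm ((w j / sum w UNIV) *\<^sub>R g j - (a j / sum a UNIV) *\<^sub>R h j))\<^sup>2)
          \<le> ((1/\<gamma>)*C*(\<eta>+e) + e/(\<gamma>*(\<gamma>-e))*C^2)\<^sup>2 / real CARD('j)"
proof -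
  define n where "n = real CARD('j)"
  define D where "D = sum w UNIV"
  define A where "A = sum a UNIV"
  define E where "E j = (w j / D) *\<^sub>R g j - (a j / A) *\<^sub>R h j" for j
  define B1 where "B1 = C*(\<eta>+e)/(sqrt n * \<gamma>)"
  define B2 where "B2 = C*(C*e/(sqrt n * \<gamma>*(\<gamma>-e)))"
  have n1: "n \<ge> 1" unfolding n_def
    using finite_UNIV_card_ge_0[where 'a='j] by simp
  have g0: "\<gamma> > 0" using e0 eg by linarith
  have Dg': "D > n*\<gamma>" using Dg by (simp add: D_def n_def)
  have s1: "A - D \<le> n*e"
  proof -
    have "A - D = (\<Sum>j\<in>UNIV. a j - w j)" by (simp add: A_def D_def sum_subtractf)
    also have "\<dots> \<le> of_nat (card (UNIV::'j set)) * e"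
      by (rule sum_bounded_above) (use ae in \<open>auto simp: abs_le_iff\<close>)
    finally show ?thesis by (simp add: n_def)
  qed
  have s2: "D - A \<le> n*e"
  proof -
    have "D - A = (\<Sum>j\<in>UNIV. w j - a j)" by (simp add: A_def D_def sum_subtractf)
    also have "\<dots> \<le> of_nat (card (UNIV::'j set)) * e"
      by (rule sum_bounded_above) (use ae in \<open>auto simp: abs_le_iff\<close>)
    finally show ?thesis by (simp add: n_def)
  qed
  have DC: "D \<le> n*C"
  proof -
    have "D \<le> of_nat (card (UNIV::'j set)) * C" unfolding D_def
      by (rule sum_bounded_above) (use wC in auto)
    then show ?thesis by (simp add: n_def)
  qed
  have nen: "n*e \<le> n*\<gamma>" using eg n1 by (intro mult_left_mono) auto
  have A0: "A > 0" using s2 nen Dg' by linarith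
  have D0: "D > 0" using A0 nen Dg' e0 n1 by (smt (verit) mult_nonneg_nonneg)
  have sn: "sqrt n > 0" using n1 by simp
  have snsn: "sqrt n * sqrt n = n" using n1 by simp
  have PN: "norm (w j *\<^sub>R g j - a j *\<^sub>R h j) \<le> C*(\<eta>+e)" for j
    by (rule pair_norm) (use w0 wC ae gh hb in auto)
  have Ceta: "0 \<le> C*(\<eta>+e)" using C0 \<eta>0 e0 by simp
  have L2P: "L2_set (\<lambda>j. norm ((1/X) *\<^sub>R (w j *\<^sub>R g j - a j *\<^sub>R h j))) UNIV \<le> B1" if X: "X \<ge> D" for X
  proof -
    have X0: "X > 0" using X D0 by linarith
    have "L2_set (\<lambda>j. norm ((1/X) *\<^sub>R (w j *\<^sub>R g j - a j *\<^sub>R h j))) UNIV \<le> L2_set (\<lambda>j::'j. C*(\<eta>+e)/X) UNIV"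
      by (rule L2_set_mono) (use PN X0 in \<open>auto simp: divide_right_mono\<close>)
    also have "\<dots> = sqrt n * (C*(\<eta>+e)/X)" using Ceta X0 by (simp add: L2_set_constant n_def)
    also have "\<dots> \<le> B1"
    proof -
      have "sqrt n * (sqrt n * \<gamma>) \<le> X" using snsn Dg' X by (simp add: mult.assoc[symmetric])
      then have "sqrt n / X \<le> 1 / (sqrt n * \<gamma>)" using X0 sn g0 by (simp add: divide_simps mult.commute)
      then have "C*(\<eta>+e) * (sqrt n / X) \<le> C*(\<eta>+e) * (1 / (sqrt n * \<gamma>))" using Ceta by (rule mult_left_mono)
      then show ?thesis by (simp add: B1_def mult.commute)
    qed
    finally show ?thesis .
  qed
  have main: "L2_set (\<lambda>j. norm (E j)) UNIV \<le> B1 + B2"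
  proof (cases "A \<le> D")
    case True
    define P where "P j = (1/D) *\<^sub>R (w j *\<^sub>R g j - a j *\<^sub>R h j)" for j
    define Q where "Q j = ((1/D - 1/A) * a j) *\<^sub>R h j" for j
    have EPQ: "E j = P j + Q j" for j
      using A0 D0 by (simp add: E_def P_def Q_def algebra_simps divide_inverse)
    have "L2_set (\<lambda>j. norm (E j)) UNIV \<le> L2_set (\<lambda>j. norm (P j) + norm (Q j)) UNIV"
      by (rule L2_set_mono) (auto simp: EPQ norm_triangle_ineq)
    also have "\<dots> \<le> L2_set (\<lambda>j. norm (P j)) UNIV + L2_set (\<lambda>j. norm (Q j)) UNIV"
      by (rule L2_set_triangle_ineq)
    also have "L2_set (\<lambda>j. norm (P j)) UNIV \<le> B1" unfolding P_def by (rule L2P) simp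
    also have "L2_set (\<lambda>j. norm (Q j)) UNIV \<le> B2"
    proof -
      define S where "S = (\<Sum>j\<in>UNIV. (a j)^2)"
      have k0: "0 \<le> 1/A - 1/D" using True A0 D0 by (simp add: divide_simps)
      have "L2_set (\<lambda>j. norm (Q j)) UNIV \<le> L2_set (\<lambda>j. ((1/A - 1/D) * C) * \<bar>a j\<bar>) UNIV"
      proof (rule L2_set_mono)
        fix j
        have "norm (Q j) = (1/A - 1/D) * \<bar>a j\<bar> * norm (h j)"
          using k0 by (simp add: Q_def abs_mult abs_minus_commute)
        also have "\<dots> \<le> (1/A - 1/D) * \<bar>a j\<bar> * C" using hb k0 by (intro mult_left_mono) auto
        finally show "norm (Q j) \<le> ((1/A - 1/D) * C) * \<bar>a j\<bar>" by (simp add: algebra_simps)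
      qed simp
      also have "\<dots> = ((1/A - 1/D) * C) * L2_set (\<lambda>j. \<bar>a j\<bar>) UNIV"
        using k0 C0 by (simp add: L2_set_right_distrib)
      also have "L2_set (\<lambda>j. \<bar>a j\<bar>) UNIV = sqrt S" by (simp add: L2_set_def S_def)
      also have "(1/A - 1/D) * C * sqrt S = C * (sqrt S * ((D - A)/(A*D)))"
        using A0 D0 by (simp add: divide_simps)
      also have "\<dots> \<le> C * (C*e/(sqrt n * \<gamma>*(\<gamma>-e)))"
      proof (rule mult_left_mono[OF _ less_imp_le[OF C0]], rule key_ineq)
        show "S \<le> 2*C*A - (C+2*e)*D + n*(e^2 + 2*C*e)"
        proof -
          have "S \<le> (\<Sum>j\<in>UNIV. 2*C*a j - (C+2*e)*w j + (e^2 + 2*C*e))"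
            unfolding S_def by (rule sum_mono, rule chord_pt) (use w0 wC ae in auto)
          also have "\<dots> = 2*C*A - (C+2*e)*D + n*(e^2 + 2*C*e)"
            by (simp add: sum.distrib sum_subtractf sum_distrib_left A_def D_def n_def)
          finally show ?thesis .
        qed
      qed (use e0 eg C0 Dg' DC A0 True s2 n1 in \<open>auto simp: S_def sum_nonneg\<close>)
      also have "\<dots> = B2" by (simp add: B2_def)
      finally show ?thesis .
    qed
    finally show ?thesis by simp
  next
    case False
    define P where "P j = (1/A) *\<^sub>R (w j *\<^sub>R g j - a j *\<^sub>R h j)" for j
    define Q where "Q j = ((1/D - 1/A) * w j) *\<^sub>R g j" for j
    have EPQ: "E j = P j + Q j" for j
      using A0 D0 by (simp add: E_def P_def Q_def algebra_simps divide_inverse)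
    have k0: "0 \<le> 1/D - 1/A" using False A0 D0 by (simp add: divide_simps)
    have "L2_set (\<lambda>j. norm (E j)) UNIV \<le> L2_set (\<lambda>j. norm (P j) + norm (Q j)) UNIV"
      by (rule L2_set_mono) (auto simp: EPQ norm_triangle_ineq)
    also have "\<dots> \<le> L2_set (\<lambda>j. norm (P j)) UNIV + L2_set (\<lambda>j. norm (Q j)) UNIV"
      by (rule L2_set_triangle_ineq)
    also have "L2_set (\<lambda>j. norm (P j)) UNIV \<le> B1" unfolding P_def by (rule L2P) (use False in simp)
    also have "L2_set (\<lambda>j. norm (Q j)) UNIV \<le> B2"
    proof -
      have "L2_set (\<lambda>j. norm (Q j)) UNIV \<le> L2_set (\<lambda>j::'j. (1/D - 1/A) * C * C) UNIV"
      proof (rule L2_set_mono)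
        fix j
        have "norm (Q j) = (1/D - 1/A) * w j * norm (g j)"
          using k0 w0[of j] by (simp add: Q_def abs_mult)
        also have "\<dots> \<le> (1/D - 1/A) * C * C" using gb wC w0 k0 C0
          by (intro mult_mono mult_left_mono) auto
        finally show "norm (Q j) \<le> (1/D - 1/A) * C * C" .
      qed simp
      also have "\<dots> = sqrt n * ((1/D - 1/A) * C * C)" using k0 C0 by (simp add: L2_set_constant n_def)
      also have "\<dots> \<le> B2"
      proof -
        have r1: "1/D - 1/A \<le> n*e/(D*D)"
        proof -
          have "(A - D) * D \<le> (n*e) * A" using s1 False D0 e0 n1
            by (intro mult_mono) auto
          then show ?thesis using A0 D0 by (simp add: divide_simps)
        qed
        have r2: "n*(n*e)/(D*D) \<le> e/(\<gamma>*\<gamma>)"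
        proof -
          have "(n*\<gamma>)*(n*\<gamma>) \<le> D*D" using Dg' n1 g0 D0 by (intro mult_mono) auto
          then have "e*((n*\<gamma>)*(n*\<gamma>)) \<le> e*(D*D)" using e0 by (rule mult_left_mono)
          then show ?thesis using D0 g0 by (simp add: divide_simps) (simp add: algebra_simps)
        qed
        have r3: "e/(\<gamma>*\<gamma>) \<le> e/(\<gamma>*(\<gamma>-e))"
          using e0 eg g0 by (intro divide_left_mono mult_left_mono) auto
        have "n*(1/D - 1/A) \<le> e/(\<gamma>*(\<gamma>-e))"
          using mult_left_mono[OF r1, of n] n1 r2 r3 by simp
        then have "sqrt n * (sqrt n * (1/D - 1/A)) \<le> e/(\<gamma>*(\<gamma>-e))" using snsn by (simp add: mult.assoc[symmetric])
        then have "sqrt n * (1/D - 1/A) \<le> (e/(\<gamma>*(\<gamma>-e))) / sqrt n"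
          by (intro pos_le_divide_eq[THEN iffD2, OF sn]) (metis mult.commute)
        moreover have "(e/(\<gamma>*(\<gamma>-e))) / sqrt n = e/(sqrt n * \<gamma>*(\<gamma>-e))"
          by (simp add: divide_divide_eq_left mult.commute mult.left_commute)
        ultimately have "sqrt n * (1/D - 1/A) \<le> e/(sqrt n * \<gamma>*(\<gamma>-e))" by (rule ord_le_eq_trans)
        then have "(sqrt n * (1/D - 1/A)) * (C*C) \<le> e/(sqrt n * \<gamma>*(\<gamma>-e)) * (C*C)"
          by (rule mult_right_mono) simp
        then show ?thesis by (simp add: B2_def algebra_simps)
      qed
      finally show ?thesis .
    qed
    finally show ?thesis by simp
  qed
  have B12: "B1 + B2 = ((1/\<gamma>)*C*(\<eta>+e) + e/(\<gamma>*(\<gamma>-e))*C^2) / sqrt n"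
    by (simp add: B1_def B2_def divide_simps power2_eq_square)
  have "(\<Sum>j\<in>UNIV. (norm (E j))\<^sup>2) = (L2_set (\<lambda>j. norm (E j)) UNIV)^2" by (simp add: L2_sq)
  also have "\<dots> \<le> (B1 + B2)^2" using main by (intro power_mono) auto
  also have "\<dots> = ((1/\<gamma>)*C*(\<eta>+e) + e/(\<gamma>*(\<gamma>-e))*C^2)\<^sup>2 / n"
    unfolding B12 using n1 by (simp add: power_divide)
  finally show ?thesis by (simp add: E_def D_def A_def n_def)
qed



lemma block_diff: "block (A - B) i j = block A i j - block B i j"
  by (simp add: block_def vec_eq_iff)

lemma block_Lmat:
  assumes "\<And>i. Ds W i \<noteq> 0"
  shows "block (Lmat W G) i j = (W$i$j / Ds W i) *\<^sub>R block G i j"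
  by (simp add: block_def vec_eq_iff Lmat_entry[OF assms])

lemma block_L0mat:
  assumes "\<And>i. Ds W i \<noteq> 0"
  shows "block (L0mat W G) i j = (offdiag W$i$j / Ds W i) *\<^sub>R block G i j"
proof -
  have "\<And>i. Ds (offdiag W) i \<noteq> 0" using assms by (simp add: Ds_offdiag)
  then show ?thesis unfolding L0mat_def by (simp add: block_Lmat Ds_offdiag)
qed

lemma Ds_sum: "Ds W i = (\<Sum>j\<in>UNIV. offdiag W $ i $ j)"
proof -
  have "(\<Sum>j\<in>UNIV. offdiag W $ i $ j) = offdiag W $ i $ i + (\<Sum>j\<in>UNIV - {i}. offdiag W $ i $ j)"
    by (simp add: sum.remove)
  also have "\<dots> = (\<Sum>j\<in>UNIV - {i}. W $ i $ j)"
    by (simp add: offdiag_def)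
  finally show ?thesis by (simp add: Ds_def)
qed

theorem lemma2p3:
  fixes W Wt :: "real^'n::finite^'n"
    and G Gt :: "real^('n \<times> 'd::finite)^('n \<times> 'd)"
    and f :: "'n \<Rightarrow> real"
    and \<epsilon> \<eta> C \<gamma> :: real
  assumes f_pos: "\<forall>i. f i > 0"
    and eps_nonneg: "\<epsilon> \<ge> 0" and eta_nonneg: "\<eta> \<ge> 0"
    and W_close: "\<forall>i j. i \<noteq> j \<longrightarrow> \<bar>Wt $ i $ j / f i - W $ i $ j\<bar> \<le> \<epsilon>"
    and G_close: "\<forall>i j. norm (block Gt i j - block G i j) \<le> \<eta>"
    and C_pos: "C > 0"
    and W_bound: "\<forall>i j. 0 \<le> W $ i $ j \<and> W $ i $ j \<le> C"
    and G_bound: "\<forall>i j. norm (block G i j) \<le> C"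
    and Gt_bound: "\<forall>i j. norm (block Gt i j) \<le> C"
    and deg: "(INF i. (1 / real CARD('n)) * (\<Sum>j\<in>UNIV - {i}. W $ i $ j)) > \<gamma>"
    and gamma_eps: "\<gamma> > \<epsilon>"
  shows "opnorm (L0mat W G - L0mat Wt Gt)
           \<le> (1 / \<gamma>) * C * (\<eta> + \<epsilon>) + \<epsilon> / (\<gamma> * (\<gamma> - \<epsilon>)) * C^2
         \<and> opnorm (Lmat W G - L0mat Wt Gt)
           \<le> (1 / \<gamma>) * C * (\<eta> + \<epsilon>) + \<epsilon> / (\<gamma> * (\<gamma> - \<epsilon>)) * C^2
              + C^2 / (real CARD('n) * \<gamma>)"
proof -
  define n where "n = real CARD('n)"
  define B where "B = (1 / \<gamma>) * C * (\<eta> + \<epsilon>) + \<epsilon> / (\<gamma> * (\<gamma> - \<epsilon>)) * C^2"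
  define w where "w i j = offdiag W $ i $ j" for i j
  define a where "a i j = offdiag Wt $ i $ j / f i" for i j
  have n1: "n \<ge> 1" unfolding n_def using finite_UNIV_card_ge_0[where 'a='n] by simp
  have g0: "\<gamma> > 0" using eps_nonneg gamma_eps by linarith
  have Dg: "Ds W i > n * \<gamma>" for i
  proof -
    have bdd: "bdd_below (range (\<lambda>i. (1 / real CARD('n)) * (\<Sum>j\<in>UNIV - {i}. W $ i $ j)))"
      by (rule bdd_below_finite) simp
    have "\<gamma> < (1 / n) * Ds W i"
      using less_cINF_D[OF bdd deg, of i] by (simp add: n_def Ds_def)
    then show ?thesis using n1 by (simp add: field_simps)
  qed
  have w0: "0 \<le> w i j" and wC: "w i j \<le> C" for i j
    using W_bound C_pos by (auto simp: w_def offdiag_def)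
  have ae: "\<bar>a i j - w i j\<bar> \<le> \<epsilon>" for i j
    using W_close eps_nonneg by (auto simp: a_def w_def offdiag_def)
  have Dsw: "Ds W i = sum (w i) UNIV" for i by (simp add: w_def Ds_sum)
  have Dsa: "Ds Wt i = f i * sum (a i) UNIV" for i
    using f_pos[rule_format, of i] by (simp add: a_def Ds_sum sum_distrib_left)
  have Apos: "sum (a i) UNIV > 0" for i
  proof -
    have "(\<Sum>j\<in>UNIV. w i j - a i j) \<le> of_nat (card (UNIV::'n set)) * \<epsilon>"
      by (rule sum_bounded_above) (use ae in \<open>auto simp: abs_le_iff\<close>)
    then have "Ds W i - sum (a i) UNIV \<le> n * \<epsilon>" by (simp add: Dsw sum_subtractf n_def)
    moreover have "n * \<epsilon> \<le> n * \<gamma>" using gamma_eps n1 by (intro mult_left_mono) auto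
    ultimately show ?thesis using Dg[of i] by linarith
  qed
  have Dpos: "Ds W i > 0" for i using Dg[of i] n1 g0 by (smt (verit) mult_pos_pos)
  have nzW: "Ds W i \<noteq> 0" for i using Dpos[of i] by simp
  have nzWt: "Ds Wt i \<noteq> 0" for i using Dsa[of i] Apos[of i] f_pos[rule_format, of i] by simp
  define E where "E = L0mat W G - L0mat Wt Gt"
  have blockE: "block E i j = (w i j / sum (w i) UNIV) *\<^sub>R block G i j - (a i j / sum (a i) UNIV) *\<^sub>R block Gt i j" for i j
  proof -
    have "offdiag Wt $ i $ j / Ds Wt i = a i j / sum (a i) UNIV"
      using f_pos[rule_format, of i] by (simp add: Dsa a_def)
    then show ?thesis
      by (simp add: E_def block_diff block_L0mat[OF nzW] block_L0mat[OF nzWt] w_def Ds_sum)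
  qed
  have B0: "0 \<le> B" using g0 gamma_eps C_pos eta_nonneg eps_nonneg by (simp add: B_def)
  have rowE: "(\<Sum>j\<in>UNIV. (norm (block E i j))\<^sup>2) \<le> B\<^sup>2 / n" for i
    unfolding blockE B_def n_def
    by (rule row_bound) (use w0 wC ae G_close G_bound Gt_bound eps_nonneg gamma_eps eta_nonneg C_pos Dg[of i] in
       \<open>auto simp: Dsw n_def\<close>)
  have part1: "opnorm E \<le> B"
  proof -
    have "opnorm E \<le> sqrt (\<Sum>p\<in>UNIV. \<Sum>q\<in>UNIV. (E$p$q)\<^sup>2)" by (rule op_le_frob)
    also have "\<dots> = sqrt (\<Sum>i\<in>UNIV. \<Sum>j\<in>UNIV. (norm (block E i j))\<^sup>2)" by (simp add: frob_block)
    also have "\<dots> \<le> sqrt (\<Sum>i\<in>(UNIV::'n set). B\<^sup>2 / n)" by (intro real_sqrt_le_mono sum_mono rowE)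
    also have "\<dots> = sqrt (B\<^sup>2)" using n1 by (simp add: n_def)
    also have "\<dots> = B" using B0 by simp
    finally show ?thesis .
  qed
  define Dg2 where "Dg2 = Lmat W G - L0mat W G"
  have part2: "opnorm Dg2 \<le> C^2 / (n * \<gamma>)"
  proof (rule op_blockdiag)
    fix i j :: 'n assume "i \<noteq> j"
    then show "block Dg2 i j = 0"
      by (simp add: Dg2_def block_diff block_Lmat[OF nzW] block_L0mat[OF nzW] offdiag_def)
  next
    fix i :: 'n
    have "block Dg2 i i = (W$i$i / Ds W i) *\<^sub>R block G i i"
      by (simp add: Dg2_def block_diff block_Lmat[OF nzW] block_L0mat[OF nzW] offdiag_def)
    then have "norm (block Dg2 i i) = (W$i$i / Ds W i) * norm (block G i i)"
      using W_bound Dpos[of i] by (simp add: abs_of_nonneg)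
    also have "\<dots> \<le> (C / (n*\<gamma>)) * C"
    proof (rule mult_mono)
      show "W$i$i / Ds W i \<le> C / (n*\<gamma>)"
        using W_bound Dg[of i] n1 g0 C_pos by (intro frac_le) auto
    qed (use G_bound C_pos n1 g0 W_bound Dg[of i] in auto)
    finally show "norm (block Dg2 i i) \<le> C^2 / (n * \<gamma>)" by (simp add: power2_eq_square)
  qed
  have "opnorm (Lmat W G - L0mat Wt Gt) = onorm (\<lambda>x. E *v x + Dg2 *v x)"
    by (simp add: opnorm_def E_def Dg2_def matrix_vector_mult_add_rdistrib[symmetric])
  also have "\<dots> \<le> opnorm E + opnorm Dg2"
    unfolding opnorm_def by (rule onorm_triangle) simp_all
  also have "\<dots> \<le> B + C^2 / (n * \<gamma>)" using part1 part2 by simp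
  finally show ?thesis using part1 by (simp add: E_def B_def n_def)
qed

end
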